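(* For every bimodal model $\mathcal{M}=\langle S,R_1,R_2,V\rangle$ there exist a serial bimodal model $\mathcal{M}'$ (both relations serial) and a surjective $\boxdot$-morphism $g$ from $\mathcal{M}'$ onto $\mathcal{M}$; consequently, for every state $x$ of $\mathcal{M}'$ and every $\phi\in\mathcal{L}(\boxdot)$, $\mathcal{M}',x\vDash\phi$ iff $\mathcal{M},g(x)\vDash\phi$, and every state of $\mathcal{M}$ is of the form $g(x)$.
   Context: Fix a nonempty set $\mathbf{P}$ of propositional variables. A bimodal model is $\langle S,R_1,R_2,V\rangle$ with $S$ nonempty, $R_1,R_2\subseteq S\times S$, $V:\mathbf{P}\to\mathcal{P}(S)$. $\mathcal{L}(\boxdot):\ \phi::=p\mid\neg\phi\mid(\phi\wedge\phi)\mid\boxdot\phi$, with $\mathcal{M},s\vDash\boxdot\phi$ iff for all $t,u$ with $sR_1t$ and $sR_2u$, ($\mathcal{M},t\vDash\phi\iff\mathcal{M},u\vDash\phi$); atoms and Booleans as usual. A function $f:S\to S'$ is a $\boxdot$-morphism from $\langle S,R_1,R_2,V\rangle$ to $\langle S',R_1',R_2',V'\rangle$ if for all $x\in S$: (Var) $x\in V(p)$ iff $f(x)\in V'(p)$ for all $p$; (Forth) for all $y,z\in S$, if $xR_1y$, $xR_2z$ and $f(y)\neq f(z)$, then $f(x)R_1'f(y)$ and $f(x)R_2'f(z)$; (Back) for all $y',z'\in S'$, if $f(x)R_1'y'$, $f(x)R_2'z'$ and $y'\neq z'$, then there are $y,z\in S$ with $xR_1y$, $xR_2z$, $f(y)=y'$,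 $f(z)=z'$. *)

theory Defs
  imports Main
begin

record ('s, 'p) bimodel =
  St :: "'s set"
  R1 :: "'s \<Rightarrow> 's \<Rightarrow> bool"
  R2 :: "'s \<Rightarrow> 's \<Rightarrow> bool"
  Val :: "'p \<Rightarrow> 's set"

definition is_model :: "('s, 'p) bimodel \<Rightarrow> bool" where
  "is_model M \<longleftrightarrow> St M \<noteq> {}
     \<and> (\<forall>x y. R1 M x y \<longrightarrow> x \<in> St M \<and> y \<in> St M)
     \<and> (\<forall>x y. R2 M x y \<longrightarrow> x \<in> St M \<and> y \<in> St M)
     \<and> (\<forall>p. Val M p \<subseteq> St M)"

definition serial_model :: "('s, 'p) bimodel \<Rightarrow> bool" where
  "serial_model M \<longleftrightarrow> (\<forall>x\<in>St M. (\<exists>y. R1 M x y) \<and> (\<exists>z. R2 M x z))"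

datatype 'p form = Atom 'p | Neg "'p form" | Conj "'p form" "'p form" | Dot "'p form"

fun sat :: "('s, 'p) bimodel \<Rightarrow> 's \<Rightarrow> 'p form \<Rightarrow> bool" where
  "sat M s (Atom p) = (s \<in> Val M p)"
| "sat M s (Neg \<phi>) = (\<not> sat M s \<phi>)"
| "sat M s (Conj \<phi> \<psi>) = (sat M s \<phi> \<and> sat M s \<psi>)"
| "sat M s (Dot \<phi>) = (\<forall>t u. R1 M s t \<longrightarrow> R2 M s u \<longrightarrow> (sat M t \<phi> \<longleftrightarrow> sat M u \<phi>))"

definition dot_morphism :: "('s, 'p) bimodel \<Rightarrow> ('t, 'p) bimodel \<Rightarrow> ('s \<Rightarrow> 't) \<Rightarrow> bool" where
  "dot_morphism M M' f \<longleftrightarrow>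
     (\<forall>x\<in>St M. f x \<in> St M') \<and>
     (\<forall>x\<in>St M.
        (\<forall>p. x \<in> Val M p \<longleftrightarrow> f x \<in> Val M' p) \<and>
        (\<forall>y\<in>St M. \<forall>z\<in>St M. R1 M x y \<longrightarrow> R2 M x z \<longrightarrow> f y \<noteq> f z \<longrightarrow>
             R1 M' (f x) (f y) \<and> R2 M' (f x) (f z)) \<and>
        (\<forall>y'\<in>St M'. \<forall>z'\<in>St M'. R1 M' (f x) y' \<longrightarrow> R2 M' (f x) z' \<longrightarrow> y' \<noteq> z' \<longrightarrow>
             (\<exists>y\<in>St M. \<exists>z\<in>St M. R1 M x y \<and> R2 M x z \<and> f y = y' \<and> f z = z')))"

end

theory Submission
  imports Defs
begin

definition DD :: "('s, 'p) bimodel \<Rightarrow> 's \<Rightarrow> bool" where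
  "DD M x \<longleftrightarrow> (\<exists>y. R1 M x y) \<and> (\<exists>z. R2 M x z)"

definition MM :: "('s, 'p) bimodel \<Rightarrow> ('s \<times> nat, 'p) bimodel" where
  "MM M = \<lparr> St = St M \<times> {0},
     R1 = (\<lambda>(x,i) (y,j). x \<in> St M \<and> i = 0 \<and> j = 0 \<and> y \<in> St M \<and> (if DD M x then R1 M x y else y = x)),
     R2 = (\<lambda>(x,i) (y,j). x \<in> St M \<and> i = 0 \<and> j = 0 \<and> y \<in> St M \<and> (if DD M x then R2 M x y else y = x)),
     Val = (\<lambda>p. Val M p \<times> {0}) \<rparr>"

lemma sat_MM:
  assumes "is_model M"
  shows "\<forall>x\<in>St M. sat (MM M) (x,0) \<phi> \<longleftrightarrow> sat M x \<phi>"
proof (induction \<phi>)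
  case (Atom p) then show ?case by (simp add: MM_def)
next
  case (Neg \<phi>) then show ?case by simp
next
  case (Conj \<phi> \<psi>) then show ?case by simp
next
  case (Dot \<phi>)
  show ?case
  proof
    fix x assume x: "x \<in> St M"
    show "sat (MM M) (x,0) (Dot \<phi>) \<longleftrightarrow> sat M x (Dot \<phi>)"
    proof (cases "DD M x")
      case True
      have st: "\<And>y. R1 M x y \<Longrightarrow> y \<in> St M" "\<And>y. R2 M x y \<Longrightarrow> y \<in> St M"
        using assms unfolding is_model_def by blast+
      show ?thesis
      proof
        assume h: "sat (MM M) (x,0) (Dot \<phi>)"
        show "sat M x (Dot \<phi>)"
        proof (simp only: sat.simps, intro allI impI)
          fix t u assume "R1 M x t" "R2 M x u"
          then have "R1 (MM M) (x,0) (t,0)" "R2 (MM M) (x,0) (u,0)"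
            using True x st by (auto simp: MM_def)
          then have "sat (MM M) (t,0) \<phi> = sat (MM M) (u,0) \<phi>" using h by simp
          then show "sat M t \<phi> = sat M u \<phi>"
            using Dot \<open>R1 M x t\<close> \<open>R2 M x u\<close> st by simp
        qed
      next
        assume h: "sat M x (Dot \<phi>)"
        show "sat (MM M) (x,0) (Dot \<phi>)"
        proof (simp only: sat.simps, intro allI impI)
          fix t u assume a: "R1 (MM M) (x,0) t" "R2 (MM M) (x,0) u"
          obtain t1 t2 where t: "t = (t1,t2)" by fastforce
          obtain u1 u2 where u: "u = (u1,u2)" by fastforce
          have "R1 M x t1" "R2 M x u1" "t2 = 0" "u2 = 0" "t1 \<in> St M" "u1 \<in> St M"
            using a True t u by (auto simp: MM_def)
          then show "sat (MM M) t \<phi> = sat (MM M) u \<phi>"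
            using h Dot t u by auto
        qed
      qed
    next
      case False
      have "sat M x (Dot \<phi>)" using False by (auto simp: DD_def)
      moreover have "sat (MM M) (x,0) (Dot \<phi>)"
        using False by (auto simp: MM_def)
      ultimately show ?thesis by simp
    qed
  qed
qed

theorem mainTheorem10:
  fixes M :: "('s, 'p) bimodel"
  assumes "is_model M"
  shows "\<exists>(M' :: ('s \<times> nat, 'p) bimodel) g.
           is_model M' \<and> serial_model M' \<and> dot_morphism M' M g \<and> g ` St M' = St M \<and>
           (\<forall>x\<in>St M'. \<forall>\<phi>. sat M' x \<phi> \<longleftrightarrow> sat M (g x) \<phi>) \<and>
           (\<forall>s\<in>St M. \<exists>x\<in>St M'. s = g x)"
proof (intro exI conjI)
  have m: "St M \<noteq> {}" "\<And>x y. R1 M x y \<Longrightarrow> x \<in> St M \<and> y \<in> St M"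
    "\<And>x y. R2 M x y \<Longrightarrow> x \<in> St M \<and> y \<in> St M" "\<And>p. Val M p \<subseteq> St M"
    using assms unfolding is_model_def by blast+
  show "is_model (MM M)" using m by (fastforce simp: is_model_def MM_def)
  show "serial_model (MM M)"
    unfolding serial_model_def
  proof
    fix xx assume xx: "xx \<in> St (MM M)"
    then obtain x where x: "xx = (x,0)" "x \<in> St M" by (auto simp: MM_def)
    show "(\<exists>y. R1 (MM M) xx y) \<and> (\<exists>z. R2 (MM M) xx z)"
    proof (cases "DD M x")
      case True
      then obtain y z where "R1 M x y" "R2 M x z" by (auto simp: DD_def)
      then show ?thesis using True x m
        by (intro conjI exI[of _ "(y,0)"] exI[of _ "(z,0)"]) (auto simp: MM_def)
    next
      case False
      then show ?thesis using x
        by (intro conjI exI[of _ "(x,0)"]) (auto simp: MM_def)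
    qed
  qed
  show "dot_morphism (MM M) M fst" using m
    by (auto simp: dot_morphism_def MM_def DD_def)
  show "fst ` St (MM M) = St M" by (auto simp: MM_def)
  show "\<forall>x\<in>St (MM M). \<forall>\<phi>. sat (MM M) x \<phi> \<longleftrightarrow> sat M (fst x) \<phi>"
    using sat_MM[OF assms] by (auto simp: MM_def)
  show "\<forall>s\<in>St M. \<exists>x\<in>St (MM M). s = fst x" by (auto simp: MM_def)
qed

end
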